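(* As $t\to+\infty$, $$f(t,1/e)\sim\left(\frac{\pi t}{2}\right)^{1/2}e^{t},$$ where $f(t,a)=t\int_0^1(ax)^{-tx}\,dx$.
   Context: For real $a>0$ and real $t$, $f(t,a)=t\int_0^1 (ax)^{-tx}\,dx$, where $(ax)^{-tx}=\exp(-tx\ln(ax))$ for $x\in(0,1]$. The notation $g\sim h$ means $g/h\to1$. *)

theory Defs
  imports "HOL-Analysis.Analysis" "HOL-Library.Landau_Symbols"
begin

text \<open>f(t,a) = t * integral over [0,1] of (a x)^(-t x) = exp(-t x ln(a x)).
  The value of the integrand at x = 0 is irrelevant (null set).\<close>
definition f :: "real \<Rightarrow> real \<Rightarrow> real" where
  "f t a = t * integral {0..1} (\<lambda>x. exp (- t * x * ln (a * x)))"

end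

theory Submission
  imports Defs "HOL-Probability.Distributions" "HOL-Real_Asymp.Real_Asymp"
begin


definition hh :: "real \<Rightarrow> real" where "hh x = 1 - x + x * ln x"

lemma integrand_eq:
  assumes "x \<in> {0..1}"
  shows "exp (- t * x * ln (1 / exp 1 * x)) = exp t * exp (- t * hh x)"
proof (cases "x = 0")
  case True then show ?thesis by (simp add: hh_def exp_minus field_simps)
next
  case False
  then have "x > 0" using assms by auto
  then have "ln (1 / exp 1 * x) = ln x - 1" by (simp add: ln_mult ln_div)
  then have "- t * x * ln (1 / exp 1 * x) = t + (- t * hh x)" by (simp only: hh_def) (simp add: algebra_simps)
  then show ?thesis by (metis exp_add)
qed

lemma hh_lower:
  assumes "x \<in> {0..1}"
  shows "(1 - x)^2 / 2 \<le> hh x"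
proof (cases "x = 0")
  case True then show ?thesis by (simp add: hh_def)
next
  case False
  then have x: "0 < x" "x \<le> 1" using assms by auto
  define p where "p y = hh y - (1 - y)^2 / 2" for y
  have "p 1 \<le> p x"
  proof (rule DERIV_nonpos_imp_nonincreasing[OF x(2)])
    fix y assume y: "x \<le> y" "y \<le> 1"
    then have "y > 0" using x by auto
    have "DERIV p y :> (ln y + (1 - y))"
      unfolding p_def[abs_def] hh_def
      using \<open>y > 0\<close> by (auto intro!: derivative_eq_intros simp: field_simps power2_eq_square)
    moreover have "ln y + (1 - y) \<le> 0" using ln_le_minus_one[OF \<open>y>0\<close>] by simp
    ultimately show "\<exists>d. DERIV p y :> d \<and> d \<le> 0" by blast
  qed
  then show ?thesis by (simp add: p_def hh_def)
qed

lemma hh_upper: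
  assumes "0 < c" "c \<le> x" "x \<le> 1"
  shows "hh x \<le> (1 - x)^2 / (2 * c)"
proof -
  define p where "p y = (1 - y)^2 / (2 * c) - hh y" for y
  have "p 1 \<le> p x"
  proof (rule DERIV_nonpos_imp_nonincreasing[OF assms(3)])
    fix y assume y: "x \<le> y" "y \<le> 1"
    then have "y > 0" using assms by auto
    have "DERIV p y :> (- (1 - y) / c - ln y)"
      unfolding p_def[abs_def] hh_def
      using \<open>y > 0\<close> \<open>c > 0\<close> by (auto intro!: derivative_eq_intros simp: field_simps power2_eq_square)
    moreover have "- (1 - y) / c - ln y \<le> 0"
    proof -
      have "ln (1 / y) \<le> 1 / y - 1" using ln_le_minus_one[of "1/y"] \<open>y>0\<close> by simp
      then have "- ln y \<le> (1 - y) / y" using \<open>y>0\<close> by (simp add: ln_div field_simps)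
      also have "(1 - y) / y \<le> (1 - y) / c"
        using y assms \<open>y>0\<close> by (intro divide_left_mono) auto
      finally have "- ln y \<le> (1 - y) / c" .
      moreover have "- (1 - y) / c = - ((1 - y) / c)" by (simp add: divide_simps)
      ultimately show ?thesis by linarith
    qed
    ultimately show "\<exists>d. DERIV p y :> d \<and> d \<le> 0" by blast
  qed
  then show ?thesis by (simp add: p_def hh_def)
qed

lemma hh_cont: "continuous_on {0..1} hh"
proof -
  have "continuous (at x within {0..1}) hh" if "x \<in> {0..1}" for x
  proof (cases "x = 0")
    case True
    have "(hh \<longlongrightarrow> 1) (at_right 0)" unfolding hh_def by real_asymp
    then show ?thesis using True
      by (simp add: continuous_within at_within_Icc_at_right hh_def)
  next
    case False
    then have "x > 0" using that by auto
    then have "isCont hh x" unfolding hh_def by (auto intro!: continuous_intros)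
    then show ?thesis using continuous_at_imp_continuous_at_within by blast
  qed
  then show ?thesis using continuous_on_eq_continuous_within by blast
qed



definition GG :: "real \<Rightarrow> real" where "GG R = integral {0..R} (\<lambda>v. exp (- v\<^sup>2))"

lemma GG_tendsto: "(GG \<longlongrightarrow> sqrt pi / 2) at_top"
proof -
  note gm = has_bochner_integral_iff[THEN iffD1, OF gaussian_moment_0]
  note int = gm[THEN conjunct1] and eq = gm[THEN conjunct2]
  have lim: "((\<lambda>y. \<integral>x. indicator {..y} x *\<^sub>R (indicator {0..} x *\<^sub>R exp (- x\<^sup>2)) \<partial>lborel) \<longlongrightarrow> sqrt pi / 2) at_top"
    using tendsto_integral_at_top[OF sets_lborel int] unfolding eq .
  show ?thesis
  proof (rule Lim_transform_eventually[OF lim])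
    show "\<forall>\<^sub>F y in at_top. (\<integral>x. indicator {..y} x *\<^sub>R (indicator {0..} x *\<^sub>R exp (- x\<^sup>2)) \<partial>lborel) = GG y"
    proof (rule eventually_at_top_linorder[THEN iffD2], intro exI allI impI)
      fix y :: real assume "0 \<le> y"
      have *: "(\<lambda>x. indicator {..y} x *\<^sub>R (indicator {0..} x *\<^sub>R exp (- x\<^sup>2))) = (\<lambda>x::real. indicator {0..y} x *\<^sub>R exp (- x\<^sup>2))"
        by (rule ext) (simp split: split_indicator)
      have si: "set_integrable lborel {0..y} (\<lambda>x::real. exp (- x\<^sup>2))"
        unfolding set_integrable_def
        by (rule borel_integrable_compact) (auto intro!: continuous_intros)
      have "(\<integral>x. indicator {0..y} x *\<^sub>R exp (- x\<^sup>2) \<partial>lborel) = (LINT x : {0..y} | lborel. exp (- x\<^sup>2))"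
        by (simp add: set_lebesgue_integral_def)
      also have "\<dots> = GG y" using set_borel_integral_eq_integral(2)[OF si] by (simp add: GG_def)
      finally show "(\<integral>x. indicator {..y} x *\<^sub>R (indicator {0..} x *\<^sub>R exp (- x\<^sup>2)) \<partial>lborel) = GG y"
        using * by simp
    qed
  qed
qed

lemma GG_mono: assumes "0 \<le> a" "a \<le> b" shows "GG a \<le> GG b"
  unfolding GG_def
  by (rule integral_subset_le) (use assms in \<open>auto intro!: integrable_continuous_interval continuous_intros\<close>)

lemma GG_le: assumes "0 \<le> R" shows "GG R \<le> sqrt pi / 2"
proof (rule tendsto_lowerbound[OF GG_tendsto])
  show "\<forall>\<^sub>F x in at_top. GG R \<le> GG x"
    using eventually_ge_at_top[of R] by eventually_elim (use assms GG_mono in auto)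
qed simp

lemma subst_gauss:
  assumes "k > 0" "L \<ge> 0"
  shows "integral {1 - L..1} (\<lambda>x. exp (- k * (1 - x)\<^sup>2)) = GG (L * sqrt k) / sqrt k"
proof -
  let ?g = "\<lambda>x. sqrt k * (x - 1)"
  have img: "?g ` {1 - L..1} \<subseteq> {- L * sqrt k..0}"
  proof
    fix y assume "y \<in> ?g ` {1 - L..1}"
    then obtain x where x: "x \<in> {1 - L..1}" "y = ?g x" by auto
    have "sqrt k * (- L) \<le> sqrt k * (x - 1)" using x assms by (intro mult_left_mono) auto
    moreover have "sqrt k * (x - 1) \<le> 0" using x assms by (simp add: mult_nonneg_nonpos)
    ultimately show "y \<in> {- L * sqrt k..0}" using x by (simp add: algebra_simps)
  qed
  have "((\<lambda>x. sqrt k *\<^sub>R exp (- (?g x)\<^sup>2)) has_integral (integral {?g (1 - L)..?g 1} (\<lambda>v. exp (- v\<^sup>2)))) {1 - L..1}"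
  proof (rule has_integral_substitution[where c = "- L * sqrt k" and d = 0])
    show "1 - L \<le> 1" using assms by simp
    show "?g (1 - L) \<le> ?g 1" using assms by (simp add: mult_nonneg_nonneg)
    show "?g ` {1 - L..1} \<subseteq> {- L * sqrt k..0}" by (rule img)
    show "continuous_on {- L * sqrt k..0} (\<lambda>v. exp (- v\<^sup>2))" by (intro continuous_intros)
    fix x show "(?g has_real_derivative sqrt k) (at x within {1 - L..1})"
      by (auto intro!: derivative_eq_intros)
  qed
  moreover have "integral {?g (1 - L)..?g 1} (\<lambda>v. exp (- v\<^sup>2)) = GG (L * sqrt k)"
  proof -
    have r0: "integral {- (L * sqrt k)..- 0} (\<lambda>x. exp (- (- x)\<^sup>2)) = integral {0..L * sqrt k} (\<lambda>v. exp (- v\<^sup>2))"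
      by (rule Henstock_Kurzweil_Integration.integral_reflect_real)
    have e: "(\<lambda>x::real. exp (- (- x)\<^sup>2)) = (\<lambda>x. exp (- x\<^sup>2))" by simp
    have "?g (1 - L) = - (L * sqrt k)" "?g 1 = - 0" by (simp_all add: algebra_simps)
    then show ?thesis using r0 unfolding e GG_def by (simp only:)
  qed
  moreover have "(\<lambda>x. sqrt k *\<^sub>R exp (- (?g x)\<^sup>2)) = (\<lambda>x. sqrt k * exp (- k * (1 - x)\<^sup>2))"
  proof
    fix x
    have "(sqrt k * (x - 1))\<^sup>2 = k * (1 - x)\<^sup>2" using assms by (simp add: power_mult_distrib power2_eq_square algebra_simps)
    then show "sqrt k *\<^sub>R exp (- (?g x)\<^sup>2) = sqrt k * exp (- k * (1 - x)\<^sup>2)" by simp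
  qed
  ultimately have "((\<lambda>x. sqrt k * exp (- k * (1 - x)\<^sup>2)) has_integral GG (L * sqrt k)) {1 - L..1}"
    by simp
  then have "((\<lambda>x. (1 / sqrt k) *\<^sub>R (sqrt k * exp (- k * (1 - x)\<^sup>2))) has_integral (1 / sqrt k) *\<^sub>R GG (L * sqrt k)) {1 - L..1}"
    by (rule has_integral_cmul)
  moreover have "(\<lambda>x. (1 / sqrt k) *\<^sub>R (sqrt k * exp (- k * (1 - x)\<^sup>2))) = (\<lambda>x. exp (- k * (1 - x)\<^sup>2))"
    using assms by (auto simp: fun_eq_iff)
  moreover have "(1 / sqrt k) *\<^sub>R GG (L * sqrt k) = GG (L * sqrt k) / sqrt k" by simp
  ultimately have "((\<lambda>x. exp (- k * (1 - x)\<^sup>2)) has_integral GG (L * sqrt k) / sqrt k) {1 - L..1}"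
    by simp
  then show ?thesis by (rule integral_unique)
qed



definition JJ :: "real \<Rightarrow> real" where "JJ t = integral {0..1} (\<lambda>x. exp (- t * hh x))"

lemma f_eq: "f t (1 / exp 1) = t * (exp t * JJ t)"
proof -
  have "integral {0..1} (\<lambda>x. exp (- t * x * ln (1 / exp 1 * x))) = integral {0..1} (\<lambda>x. exp t * exp (- t * hh x))"
    by (rule integral_cong) (rule integrand_eq)
  also have "\<dots> = exp t * JJ t" unfolding JJ_def by simp
  finally show ?thesis by (simp add: f_def)
qed

lemma JJ_integrable: "(\<lambda>x. exp (- t * hh x)) integrable_on {a..b}" if "{a..b} \<subseteq> {0..1}"
proof -
  have "continuous_on {0..1} (\<lambda>x. exp (- t * hh x))"
    by (intro continuous_intros hh_cont)
  then have "(\<lambda>x. exp (- t * hh x)) integrable_on {0..1}" by (rule integrable_continuous_interval)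
  then show ?thesis using that by (rule integrable_on_subinterval)
qed

lemma JJ_upper:
  assumes "t > 0"
  shows "JJ t \<le> GG (sqrt (t / 2)) / sqrt (t / 2)"
proof -
  have "JJ t \<le> integral {0..1} (\<lambda>x. exp (- (t / 2) * (1 - x)\<^sup>2))"
    unfolding JJ_def
  proof (rule integral_le)
    show "(\<lambda>x. exp (- t * hh x)) integrable_on {0..1}" using JJ_integrable by simp
    show "(\<lambda>x. exp (- (t / 2) * (1 - x)\<^sup>2)) integrable_on {0..1}"
      by (intro integrable_continuous_interval continuous_intros)
    fix x :: real assume "x \<in> {0..1}"
    then have "(1 - x)\<^sup>2 / 2 \<le> hh x" by (rule hh_lower)
    then have "t * ((1 - x)\<^sup>2 / 2) \<le> t * hh x" using assms by (intro mult_left_mono) auto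
    then show "exp (- t * hh x) \<le> exp (- (t / 2) * (1 - x)\<^sup>2)" by simp
  qed
  also have "\<dots> = GG (1 * sqrt (t / 2)) / sqrt (t / 2)"
    using subst_gauss[of "t / 2" 1] assms by simp
  finally show ?thesis by simp
qed

lemma JJ_lower:
  assumes "t > 0" "0 < c" "c < 1"
  shows "GG ((1 - c) * sqrt (t / (2 * c))) / sqrt (t / (2 * c)) \<le> JJ t"
proof -
  have "GG ((1 - c) * sqrt (t / (2 * c))) / sqrt (t / (2 * c)) = integral {1 - (1 - c)..1} (\<lambda>x. exp (- (t / (2 * c)) * (1 - x)\<^sup>2))"
    using subst_gauss[of "t / (2 * c)" "1 - c"] assms by simp
  also have "\<dots> = integral {c..1} (\<lambda>x. exp (- (t / (2 * c)) * (1 - x)\<^sup>2))" by simp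
  also have "\<dots> \<le> integral {c..1} (\<lambda>x. exp (- t * hh x))"
  proof (rule integral_le)
    show "(\<lambda>x. exp (- t * hh x)) integrable_on {c..1}" using JJ_integrable assms by simp
    show "(\<lambda>x. exp (- (t / (2 * c)) * (1 - x)\<^sup>2)) integrable_on {c..1}"
      by (intro integrable_continuous_interval continuous_intros)
    fix x :: real assume x: "x \<in> {c..1}"
    then have "hh x \<le> (1 - x)\<^sup>2 / (2 * c)" using assms by (intro hh_upper) auto
    then have "t * hh x \<le> t * ((1 - x)\<^sup>2 / (2 * c))" using assms by (intro mult_left_mono) auto
    then show "exp (- (t / (2 * c)) * (1 - x)\<^sup>2) \<le> exp (- t * hh x)" by simp
  qed
  also have "\<dots> \<le> JJ t"
    unfolding JJ_def
  proof (rule integral_subset_le)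
    show "{c..1} \<subseteq> {0..1::real}" using assms by auto
    show "(\<lambda>x. exp (- t * hh x)) integrable_on {c..1}" using JJ_integrable assms by simp
    show "(\<lambda>x. exp (- t * hh x)) integrable_on {0..1}" using JJ_integrable by simp
  qed simp
  finally show ?thesis .
qed

lemma alg1:
  assumes "t > 0"
  shows "t * (GG (sqrt (t / 2)) / sqrt (t / 2)) / sqrt (pi * t / 2) = 2 * GG (sqrt (t / 2)) / sqrt pi"
  using assms by (simp add: real_sqrt_mult real_sqrt_divide field_simps)

lemma alg2:
  assumes "t > 0" "c > 0"
  shows "t * (GG ((1 - c) * sqrt (t / (2 * c))) / sqrt (t / (2 * c))) / sqrt (pi * t / 2)
     = GG ((1 - c) * sqrt (t / (2 * c))) * (2 * sqrt c / sqrt pi)"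
  using assms by (simp add: real_sqrt_mult real_sqrt_divide field_simps)

lemma inner_lim:
  assumes "0 < c" "c < 1"
  shows "filterlim (\<lambda>t. (1 - c) * sqrt (t / (2 * c))) at_top at_top"
  using assms by real_asymp

theorem mainTheorem4:
  shows "(\<lambda>t. f t (1 / exp 1)) \<sim>[at_top] (\<lambda>t. sqrt (pi * t / 2) * exp t)"
proof (rule asymp_equivI')
  define r where "r t = t * JJ t / sqrt (pi * t / 2)" for t
  have req: "\<forall>\<^sub>F t in at_top. r t = f t (1 / exp 1) / (sqrt (pi * t / 2) * exp t)"
    using eventually_gt_at_top[of 0] by eventually_elim (simp add: r_def f_eq field_simps)
  have up: "\<forall>\<^sub>F t in at_top. r t \<le> 1"
    using eventually_gt_at_top[of 0]
  proof eventually_elim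
    case (elim t)
    have "r t \<le> t * (GG (sqrt (t / 2)) / sqrt (t / 2)) / sqrt (pi * t / 2)"
      unfolding r_def using JJ_upper[OF elim] elim
      by (intro divide_right_mono mult_left_mono) auto
    also have "\<dots> = 2 * GG (sqrt (t / 2)) / sqrt pi" using alg1[OF elim] .
    also have "\<dots> \<le> 2 * (sqrt pi / 2) / sqrt pi"
      using GG_le[of "sqrt (t / 2)"] elim by (intro divide_right_mono mult_left_mono) auto
    also have "\<dots> = 1" by simp
    finally show ?case .
  qed
  have "(r \<longlongrightarrow> 1) at_top"
  proof (rule order_tendstoI)
    fix b :: real assume "1 < b"
    show "\<forall>\<^sub>F t in at_top. r t < b" using up by eventually_elim (use \<open>1 < b\<close> in auto)
  next
    fix a :: real assume "a < 1"
    define s where "s = (1 + max a 0) / 2"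
    have s: "0 < s" "s < 1" "a < s" using \<open>a < 1\<close> by (auto simp: s_def)
    define c where "c = s\<^sup>2"
    have c: "0 < c" "c < 1" using s by (auto simp: c_def power_less_one_iff)
    have sc: "sqrt c = s" using s by (simp add: c_def)
    have "((\<lambda>t. GG ((1 - c) * sqrt (t / (2 * c)))) \<longlongrightarrow> sqrt pi / 2) at_top"
      by (rule filterlim_compose[OF GG_tendsto inner_lim[OF c]])
    then have "((\<lambda>t. GG ((1 - c) * sqrt (t / (2 * c))) * (2 * sqrt c / sqrt pi)) \<longlongrightarrow> sqrt pi / 2 * (2 * sqrt c / sqrt pi)) at_top"
      by (intro tendsto_mult tendsto_const)
    moreover have "sqrt pi / 2 * (2 * sqrt c / sqrt pi) = s" using sc by simp
    ultimately have "\<forall>\<^sub>F t in at_top. a < GG ((1 - c) * sqrt (t / (2 * c))) * (2 * sqrt c / sqrt pi)"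
      using s(3) by (metis order_tendstoD(1))
    then show "\<forall>\<^sub>F t in at_top. a < r t"
      using eventually_gt_at_top[of 0]
    proof eventually_elim
      case (elim t)
      have "GG ((1 - c) * sqrt (t / (2 * c))) * (2 * sqrt c / sqrt pi)
          = t * (GG ((1 - c) * sqrt (t / (2 * c))) / sqrt (t / (2 * c))) / sqrt (pi * t / 2)"
        using alg2[OF elim(2) c(1)] by simp
      also have "\<dots> \<le> r t"
        unfolding r_def using JJ_lower[OF elim(2) c] elim
        by (intro divide_right_mono mult_left_mono) auto
      finally show ?case using elim(1) by simp
    qed
  qed
  then show "((\<lambda>t. f t (1 / exp 1) / (sqrt (pi * t / 2) * exp t)) \<longlongrightarrow> 1) at_top"
    using req by (rule Lim_transform_eventually)
qed

end
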